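(* In the setting described in the context (with $L=[0,1]$), let $q\in\{1,\dots,n\}$ and assume there exists $A\subseteq\mathcal C$ with $|A|=n-q$ and $\nu_q(A)=0$. Define $\mu_*:2^{\mathcal C}\to[0,1]$ by $\mu_*(\mathcal C)=1$, $\mu_*(X)=\nu_q(X)$ if $n-q\le|X|<n$, and $\mu_*(X)=\min_{Y\supsetneq X,\ n-q\le|Y|<n}\nu_q(Y)$ if $|X|<n-q$. Then $\mu_*$ is the lowest (pointwise) among all $q$-minitive capacities $\mu:2^{\mathcal C}\to[0,1]$ satisfying $\max_{1\le k\le N}|S_\mu(x^{(k)})-\alpha^{(k)}|=\nabla_q$.
   Context: Let $\mathcal C=\{1,\dots,n\}$ and $L=[0,1]$. A capacity is a map $\mu:2^{\mathcal C}\to[0,1]$ with $\mu(\emptyset)=0$, $\mu(\mathcal C)=1$, monotone for inclusion; it is $q$-minitive if for all $X$ with $|X|<n-q$, $\mu(X)=\min_{Y\supsetneq X,\ |Y|\ge n-q}\mu(Y)$. Sugeno integral: $S_\mu(x)=\max_{A\subseteq\mathcal C}\min(\min_{i\in A}x_i,\mu(A))$ with $\min_{i\in\emptyset}x_i=1$. Training data: $N$ pairs $(x^{(k)},\alpha^{(k)})$, $x^{(k)}\in[0,1]^n$, $\alpha^{(k)}\in[0,1]$. For $A\subsetneq\mathcal C$, $\gamma_{k,A}=\max_{i\in\mathcal C\setminus A}x^{(k)}_i$. Write $t^+=\max(t,0)$. For $1\le i\le N$ and $A\subsetneq\mathcal C$ with $|A|\ge n-q$, let $\sigma_\epsilon(\alpha^{(i)},\gamma_{l,A},\alpha^{(l)})=\min\big(\tfrac{(\alpha^{(l)}-\alpha^{(i)})^+}{2},(\alpha^{(l)}-\gamma_{l,A})^+\big)$,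 $\nabla_{i,A}=\max\big((\gamma_{i,A}-\alpha^{(i)})^+,\max_{1\le l\le N}\sigma_\epsilon(\alpha^{(i)},\gamma_{l,A},\alpha^{(l)})\big)$, $\nabla_i=\min_{A\subsetneq\mathcal C,\ |A|\ge n-q}\nabla_{i,A}$, and $\nabla_q=\max_{1\le i\le N}\nabla_i$. For $A\subsetneq\mathcal C$ with $|A|\ge n-q$, $\nu_q(A)=\max_{1\le k\le N}\big(\gamma_{k,A}\,\epsilon\,\max(\alpha^{(k)}-\nabla_q,0)\big)$, where $a\,\epsilon\,b=b$ if $a<b$ and $a\,\epsilon\,b=0$ if $a\ge b$. *)

theory Defs
  imports Complex_Main
begin

text \<open>Criteria set C = {1..n}; data indexed by k in {1..N}; x k i is the value of
  criterion i in the k-th training example, alpha k its target.\<close>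

definition crit :: "nat \<Rightarrow> nat set" where
  "crit n = {1..n}"

definition pos :: "real \<Rightarrow> real" where
  "pos t = max t 0"

definition gam :: "nat \<Rightarrow> (nat \<Rightarrow> nat \<Rightarrow> real) \<Rightarrow> nat \<Rightarrow> nat set \<Rightarrow> real" where
  "gam n x k A = Max ((\<lambda>i. x k i) ` (crit n - A))"

definition sig :: "real \<Rightarrow> real \<Rightarrow> real \<Rightarrow> real" where
  "sig ai g al = min (pos (al - ai) / 2) (pos (al - g))"

definition nablaIA :: "nat \<Rightarrow> nat \<Rightarrow> (nat \<Rightarrow> nat \<Rightarrow> real) \<Rightarrow> (nat \<Rightarrow> real) \<Rightarrow> nat \<Rightarrow> nat set \<Rightarrow> real" where
  "nablaIA n N x alpha i A =
     max (pos (gam n x i A - alpha i)) (Max ((\<lambda>l. sig (alpha i) (gam n x l A) (alpha l)) ` {1..N}))"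

definition nablaI :: "nat \<Rightarrow> nat \<Rightarrow> (nat \<Rightarrow> nat \<Rightarrow> real) \<Rightarrow> (nat \<Rightarrow> real) \<Rightarrow> nat \<Rightarrow> nat \<Rightarrow> real" where
  "nablaI n N x alpha q i =
     Min ((\<lambda>A. nablaIA n N x alpha i A) ` {A. A \<subset> crit n \<and> n - q \<le> card A})"

definition nablaQ :: "nat \<Rightarrow> nat \<Rightarrow> (nat \<Rightarrow> nat \<Rightarrow> real) \<Rightarrow> (nat \<Rightarrow> real) \<Rightarrow> nat \<Rightarrow> real" where
  "nablaQ n N x alpha q = Max ((\<lambda>i. nablaI n N x alpha q i) ` {1..N})"

definition eps :: "real \<Rightarrow> real \<Rightarrow> real" where
  "eps a b = (if a < b then b else 0)"

definition nuQ :: "nat \<Rightarrow> nat \<Rightarrow> (nat \<Rightarrow> nat \<Rightarrow> real) \<Rightarrow> (nat \<Rightarrow> real) \<Rightarrow> nat \<Rightarrow> nat set \<Rightarrow> real" where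
  "nuQ n N x alpha q A =
     Max ((\<lambda>k. eps (gam n x k A) (max (alpha k - nablaQ n N x alpha q) 0)) ` {1..N})"

text \<open>Capacity on 2^C with values in [0,1] (only values on subsets of C matter).\<close>
definition is_capacity :: "nat \<Rightarrow> (nat set \<Rightarrow> real) \<Rightarrow> bool" where
  "is_capacity n mu \<longleftrightarrow>
     (\<forall>X. X \<subseteq> crit n \<longrightarrow> 0 \<le> mu X \<and> mu X \<le> 1) \<and>
     mu {} = 0 \<and> mu (crit n) = 1 \<and>
     (\<forall>X Y. X \<subseteq> Y \<and> Y \<subseteq> crit n \<longrightarrow> mu X \<le> mu Y)"

definition q_minitive :: "nat \<Rightarrow> nat \<Rightarrow> (nat set \<Rightarrow> real) \<Rightarrow> bool" where
  "q_minitive n q mu \<longleftrightarrow>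
     (\<forall>X. X \<subseteq> crit n \<and> card X < n - q \<longrightarrow>
        mu X = Min (mu ` {Y. X \<subset> Y \<and> Y \<subseteq> crit n \<and> n - q \<le> card Y}))"

definition minOn :: "(nat \<Rightarrow> real) \<Rightarrow> nat set \<Rightarrow> real" where
  "minOn y A = (if A = {} then 1 else Min (y ` A))"

definition sugeno :: "nat \<Rightarrow> (nat set \<Rightarrow> real) \<Rightarrow> (nat \<Rightarrow> real) \<Rightarrow> real" where
  "sugeno n mu y = Max ((\<lambda>A. min (minOn y A) (mu A)) ` Pow (crit n))"

definition err :: "nat \<Rightarrow> nat \<Rightarrow> (nat \<Rightarrow> nat \<Rightarrow> real) \<Rightarrow> (nat \<Rightarrow> real) \<Rightarrow> (nat set \<Rightarrow> real) \<Rightarrow> real" where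
  "err n N x alpha mu = Max ((\<lambda>k. \<bar>sugeno n mu (x k) - alpha k\<bar>) ` {1..N})"

text \<open>The capacity mu_* of the corollary (value outside 2^C irrelevant, set to 0).\<close>
definition mu_star :: "nat \<Rightarrow> nat \<Rightarrow> (nat \<Rightarrow> nat \<Rightarrow> real) \<Rightarrow> (nat \<Rightarrow> real) \<Rightarrow> nat \<Rightarrow> nat set \<Rightarrow> real" where
  "mu_star n N x alpha q X =
     (if X = crit n then 1
      else if X \<subset> crit n \<and> n - q \<le> card X then nuQ n N x alpha q X
      else if X \<subset> crit n then
        Min ((nuQ n N x alpha q) ` {Y. X \<subset> Y \<and> Y \<subset> crit n \<and> n - q \<le> card Y})
      else 0)"

end

theory Submission
  imports Defs
begin


lemma fin_crit[simp]: "finite (crit n)" by (simp add: crit_def)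
lemma card_crit[simp]: "card (crit n) = n" by (simp add: crit_def)

lemma exists_card_between:
  assumes "finite C" "X \<subseteq> C" "card X \<le> m" "m \<le> card C"
  shows "\<exists>Y. X \<subseteq> Y \<and> Y \<subseteq> C \<and> card Y = m"
proof -
  have "m - card X \<le> card (C - X)" using assms by (simp add: card_Diff_subset finite_subset)
  then obtain T where T: "T \<subseteq> C - X" "card T = m - card X" "finite T"
    by (rule obtain_subset_with_card_n)
  have fX: "finite X" using finite_subset[OF assms(2,1)] .
  have "card (X \<union> T) = card X + card T" using T fX by (subst card_Un_disjoint) auto
  then show ?thesis using T assms by (rule_tac x="X \<union> T" in exI) auto
qed

lemma gam_ge: assumes "j \<in> crit n - A" shows "x k j \<le> gam n x k A"
  unfolding gam_def using assms by (intro Max_ge) auto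

lemma gam_le: assumes "crit n - A \<noteq> {}" "\<And>j. j \<in> crit n - A \<Longrightarrow> x k j \<le> u"
  shows "gam n x k A \<le> u"
  unfolding gam_def using assms by (subst Max_le_iff) auto

lemma gam_less: assumes "crit n - A \<noteq> {}" "\<And>j. j \<in> crit n - A \<Longrightarrow> x k j < u"
  shows "gam n x k A < u"
  unfolding gam_def using assms by (subst Max_less_iff) auto

lemma gam_mono: assumes "A \<subseteq> B" "crit n - B \<noteq> {}" shows "gam n x k B \<le> gam n x k A"
proof -
  have "crit n - A \<noteq> {}" using assms by blast
  then show ?thesis using assms by (intro gam_le) (auto intro: gam_ge)
qed

lemma gam_bounds:
  assumes "crit n - A \<noteq> {}" "\<And>i. i \<in> crit n \<Longrightarrow> 0 \<le> x k i \<and> x k i \<le> 1"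
  shows "0 \<le> gam n x k A \<and> gam n x k A \<le> 1"
proof
  obtain j where "j \<in> crit n - A" using assms by blast
  then show "0 \<le> gam n x k A" using assms(2)[of j] gam_ge[of j n A x k] by auto
  show "gam n x k A \<le> 1" using assms by (intro gam_le) auto
qed

lemma minOn_le: assumes "finite B" "j \<in> B" shows "minOn y B \<le> y j"
  using assms unfolding minOn_def by auto

lemma minOn_ge: assumes "finite B" "\<And>j. j \<in> B \<Longrightarrow> v \<le> y j" "v \<le> 1" shows "v \<le> minOn y B"
  using assms unfolding minOn_def by (auto simp: Min_ge_iff)

lemma minOn_gt: assumes "finite B" "\<And>j. j \<in> B \<Longrightarrow> v < y j" "v < 1" shows "v < minOn y B"
  using assms unfolding minOn_def by (auto simp: Min_gr_iff)

lemma sugeno_ge: assumes "B \<subseteq> crit n" "v \<le> minOn y B" "v \<le> mu B" shows "v \<le> sugeno n mu y"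
proof -
  have "min (minOn y B) (mu B) \<le> sugeno n mu y"
    unfolding sugeno_def using assms by (intro Max_ge) auto
  then show ?thesis using assms by linarith
qed

lemma sugeno_le: assumes "\<And>B. B \<subseteq> crit n \<Longrightarrow> min (minOn y B) (mu B) \<le> u" shows "sugeno n mu y \<le> u"
  unfolding sugeno_def using assms by (subst Max_le_iff) auto

lemma sugeno_att: "\<exists>B. B \<subseteq> crit n \<and> sugeno n mu y = min (minOn y B) (mu B)"
proof -
  have "sugeno n mu y \<in> (\<lambda>A. min (minOn y A) (mu A)) ` Pow (crit n)"
    unfolding sugeno_def by (intro Max_in) auto
  then show ?thesis by auto
qed

lemma cap_mono: "is_capacity n mu \<Longrightarrow> X \<subseteq> Y \<Longrightarrow> Y \<subseteq> crit n \<Longrightarrow> mu X \<le> mu Y"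
  unfolding is_capacity_def by blast

lemma L1:
  assumes cap: "is_capacity n mu" and A: "A \<subseteq> crit n" "crit n - A \<noteq> {}"
    and "mu A \<le> u" "gam n x k A \<le> u"
  shows "sugeno n mu (x k) \<le> u"
proof (rule sugeno_le)
  fix B assume B: "B \<subseteq> crit n"
  show "min (minOn (x k) B) (mu B) \<le> u"
  proof (cases "B \<subseteq> A")
    case True
    then have "mu B \<le> mu A" using cap_mono[OF cap] A by blast
    then show ?thesis using assms by linarith
  next
    case False
    then obtain j where j: "j \<in> B" "j \<notin> A" by blast
    have "minOn (x k) B \<le> x k j" using j B finite_subset[OF B] by (intro minOn_le) auto
    moreover have "x k j \<le> gam n x k A" using j B by (intro gam_ge) auto
    ultimately show ?thesis using assms by linarith
  qed
qed

lemma L2: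
  assumes cap: "is_capacity n mu" and v: "v \<le> sugeno n mu (x k)"
    and A: "A \<subseteq> crit n" "crit n - A \<noteq> {}" and g: "gam n x k A < v"
  shows "v \<le> mu A"
proof -
  obtain B where B: "B \<subseteq> crit n" "sugeno n mu (x k) = min (minOn (x k) B) (mu B)"
    using sugeno_att by blast
  have "B \<subseteq> A"
  proof
    fix j assume j: "j \<in> B"
    show "j \<in> A"
    proof (rule ccontr)
      assume "j \<notin> A"
      then have "x k j \<le> gam n x k A" using j B by (intro gam_ge) auto
      moreover have "minOn (x k) B \<le> x k j" using j finite_subset[OF B(1)] by (intro minOn_le) auto
      ultimately show False using v g B by linarith
    qed
  qed
  then have "mu B \<le> mu A" using cap_mono[OF cap] A by blast
  then show ?thesis using v B by linarith
qed



lemma L3: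
  assumes cap: "is_capacity n mu" and qm: "q_minitive n q mu" and q: "q \<in> {1..n}"
    and t: "sugeno n mu (x k) < 1"
  shows "\<exists>A. A \<subset> crit n \<and> n - q \<le> card A \<and> mu A \<le> sugeno n mu (x k)
             \<and> gam n x k A \<le> sugeno n mu (x k)"
proof -
  define t where "t = sugeno n mu (x k)"
  have t1: "t < 1" using t t_def by simp
  define A0 where "A0 = {j \<in> crit n. t < x k j}"
  have A0C: "A0 \<subseteq> crit n" unfolding A0_def by auto
  have fA0: "finite A0" using finite_subset[OF A0C fin_crit] .
  have mt: "t < minOn (x k) A0"
  proof (rule minOn_gt[OF fA0])
    show "\<And>j. j \<in> A0 \<Longrightarrow> t < x k j" unfolding A0_def by blast
  qed (rule t1)
  have muA0: "mu A0 \<le> t"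
  proof (rule ccontr)
    assume a: "\<not> mu A0 \<le> t"
    have "min (minOn (x k) A0) (mu A0) \<le> sugeno n mu (x k)"
      by (rule sugeno_ge[OF A0C]) simp_all
    then have "min (minOn (x k) A0) (mu A0) \<le> t" unfolding t_def .
    then show False using a mt by linarith
  qed
  have C1: "mu (crit n) = 1" using cap unfolding is_capacity_def by blast
  have A0ne: "A0 \<noteq> crit n" using muA0 C1 t1 by auto
  then have nd: "crit n - A0 \<noteq> {}" using A0C by blast
  have gA0: "gam n x k A0 \<le> t"
  proof (rule gam_le[OF nd])
    fix j assume "j \<in> crit n - A0" then show "x k j \<le> t" unfolding A0_def by auto
  qed
  show ?thesis
  proof (cases "n - q \<le> card A0")
    case True
    then show ?thesis using A0C A0ne muA0 gA0 unfolding t_def by blast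
  next
    case False
    define Ys where "Ys = {Y. A0 \<subset> Y \<and> Y \<subseteq> crit n \<and> n - q \<le> card Y}"
    have "card A0 < n - q" using False by simp
    then have eq: "mu A0 = Min (mu ` Ys)" using qm A0C unfolding q_minitive_def Ys_def by blast
    have fY: "finite Ys" unfolding Ys_def by (rule finite_subset[of _ "Pow (crit n)"]) auto
    have "crit n \<in> Ys" using A0C A0ne unfolding Ys_def by auto
    then have "Min (mu ` Ys) \<in> mu ` Ys" using fY by (intro Min_in) auto
    then obtain Y where Y: "Y \<in> Ys" "mu Y = mu A0" using eq by auto
    have "Y \<noteq> crit n" using Y C1 muA0 t1 by auto
    moreover have Ysub: "A0 \<subseteq> Y" "Y \<subseteq> crit n" "n - q \<le> card Y" using Y(1) unfolding Ys_def by auto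
    ultimately have YC: "Y \<subset> crit n" by blast
    have "gam n x k Y \<le> gam n x k A0" using Ysub YC by (intro gam_mono) auto
    then show ?thesis using Y YC Ysub gA0 muA0 unfolding t_def by (intro exI[of _ Y]) auto
  qed
qed



lemma err_ge:
  assumes "k \<in> {1..N}" shows "\<bar>sugeno n mu (x k) - alpha k\<bar> \<le> err n N x alpha mu"
  unfolding err_def using assms by (intro Max_ge) auto

lemma As_ne:
  assumes q: "q \<in> {1..n}"
  shows "\<exists>A. A \<subset> crit n \<and> n - q \<le> card A"
proof -
  obtain Y where "{} \<subseteq> Y" "Y \<subseteq> crit n" "card Y = n - q"
    using exists_card_between[of "crit n" "{}" "n - q"] by auto
  moreover have "Y \<noteq> crit n"
  proof
    assume "Y = crit n"
    then have "card Y = n" by simp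
    moreover have "n - q < n" using q by auto
    ultimately show False using \<open>card Y = n - q\<close> by simp
  qed
  ultimately have "Y \<subset> crit n \<and> n - q \<le> card Y" by auto
  then show ?thesis by blast
qed

lemma fin_As: "finite {A. A \<subset> crit n \<and> n - q \<le> card A}"
  by (rule finite_subset[of _ "Pow (crit n)"]) auto

lemma nablaI_le: assumes "A \<subset> crit n" "n - q \<le> card A"
  shows "nablaI n N x alpha q i \<le> nablaIA n N x alpha i A"
  unfolding nablaI_def using assms fin_As by (intro Min_le) auto

lemma nablaI_att: assumes q: "q \<in> {1..n}"
  shows "\<exists>A. A \<subset> crit n \<and> n - q \<le> card A \<and> nablaIA n N x alpha i A = nablaI n N x alpha q i"
proof -
  have "nablaI n N x alpha q i \<in> (\<lambda>A. nablaIA n N x alpha i A) ` {A. A \<subset> crit n \<and> n - q \<le> card A}"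
    unfolding nablaI_def using fin_As As_ne[OF q] by (intro Min_in) auto
  then show ?thesis by auto
qed

lemma nablaIA_le:
  assumes "pos (gam n x i A - alpha i) \<le> d" "\<And>l. l \<in> {1..N} \<Longrightarrow> sig (alpha i) (gam n x l A) (alpha l) \<le> d"
    "1 \<le> N"
  shows "nablaIA n N x alpha i A \<le> d"
  unfolding nablaIA_def using assms by (subst max.bounded_iff, subst Max_le_iff) auto

lemma sig_le_nablaIA: assumes "l \<in> {1..N}"
  shows "sig (alpha i) (gam n x l A) (alpha l) \<le> nablaIA n N x alpha i A"
  unfolding nablaIA_def using assms by (intro max.coboundedI2 Max_ge) auto

lemma pos_le_nablaIA: "pos (gam n x i A - alpha i) \<le> nablaIA n N x alpha i A"
  unfolding nablaIA_def by simp

lemma nablaIA_nonneg: "0 \<le> nablaIA n N x alpha i A"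
  using pos_le_nablaIA[of n x i A alpha N] unfolding pos_def by linarith

lemma nablaI_le_Q: assumes "i \<in> {1..N}" shows "nablaI n N x alpha q i \<le> nablaQ n N x alpha q"
  unfolding nablaQ_def by (rule Max_ge[OF finite_imageI[OF finite_atLeastAtMost] imageI[OF assms]])

lemma nablaQ_nonneg: assumes "1 \<le> N" "q \<in> {1..n}" shows "0 \<le> nablaQ n N x alpha q"
proof -
  obtain A where A: "nablaIA n N x alpha 1 A = nablaI n N x alpha q 1"
    using nablaI_att[OF assms(2), of N x alpha 1] by blast
  have "1 \<in> {1..N}" using assms(1) by simp
  then have "nablaI n N x alpha q 1 \<le> nablaQ n N x alpha q" by (rule nablaI_le_Q)
  moreover have "0 \<le> nablaIA n N x alpha 1 A" by (rule nablaIA_nonneg)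
  ultimately show ?thesis using A by linarith
qed

lemma LB:
  assumes N: "1 \<le> N"
    and hx: "\<And>k i. k \<in> {1..N} \<Longrightarrow> i \<in> crit n \<Longrightarrow> 0 \<le> x k i \<and> x k i \<le> 1"
    and ha: "\<And>k. k \<in> {1..N} \<Longrightarrow> 0 \<le> alpha k \<and> alpha k \<le> 1"
    and q: "q \<in> {1..n}"
    and cap: "is_capacity n mu" and qm: "q_minitive n q mu"
  shows "nablaQ n N x alpha q \<le> err n N x alpha mu"
proof -
  define d where "d = err n N x alpha mu"
  have dk: "\<And>k. k \<in> {1..N} \<Longrightarrow> \<bar>sugeno n mu (x k) - alpha k\<bar> \<le> d" unfolding d_def by (rule err_ge)
  have d0: "0 \<le> d" using dk[of 1] N by force
  have "nablaI n N x alpha q i \<le> d" if i: "i \<in> {1..N}" for i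
  proof (cases "1 \<le> alpha i + d")
    case True
    obtain A where A: "A \<subset> crit n" "n - q \<le> card A" using As_ne[OF q] by blast
    have "nablaIA n N x alpha i A \<le> d"
    proof (rule nablaIA_le[OF _ _ N])
      have "gam n x i A \<le> 1" using gam_bounds[of n A x i] A hx[OF i] by auto
      then show "pos (gam n x i A - alpha i) \<le> d" using True d0 unfolding pos_def by auto
      fix l assume l: "l \<in> {1..N}"
      have "alpha l \<le> 1" using ha[OF l] by auto
      then have "pos (alpha l - alpha i) / 2 \<le> d" using True d0 unfolding pos_def by auto
      then show "sig (alpha i) (gam n x l A) (alpha l) \<le> d" unfolding sig_def by linarith
    qed
    then show ?thesis using nablaI_le[OF A, of N x alpha i] by linarith
  next
    case False
    have Si: "sugeno n mu (x i) \<le> alpha i + d" using dk[OF i] by linarith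
    then have S1: "sugeno n mu (x i) < 1" using False by linarith
    obtain A where A: "A \<subset> crit n" "n - q \<le> card A" "mu A \<le> sugeno n mu (x i)"
       "gam n x i A \<le> sugeno n mu (x i)"
      using L3[OF cap qm q, of x i, OF S1] by blast
    have nd: "crit n - A \<noteq> {}" using A by blast
    have "nablaIA n N x alpha i A \<le> d"
    proof (rule nablaIA_le[OF _ _ N])
      show "pos (gam n x i A - alpha i) \<le> d" using A Si d0 unfolding pos_def by auto
      fix l assume l: "l \<in> {1..N}"
      show "sig (alpha i) (gam n x l A) (alpha l) \<le> d"
      proof (cases "gam n x l A < alpha l - d")
        case True
        have "alpha l - d \<le> sugeno n mu (x l)" using dk[OF l] by linarith
        then have "alpha l - d \<le> mu A" using L2[OF cap _ _ nd True] A by auto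
        then have "pos (alpha l - alpha i) / 2 \<le> d" using A Si d0 unfolding pos_def by auto
        then show ?thesis unfolding sig_def by linarith
      next
        case False
        then have "pos (alpha l - gam n x l A) \<le> d" using d0 unfolding pos_def by auto
        then show ?thesis unfolding sig_def by linarith
      qed
    qed
    then show ?thesis using nablaI_le[of A n q N x alpha i] A by linarith
  qed
  then have "Max ((\<lambda>i. nablaI n N x alpha q i) ` {1..N}) \<le> d"
    using N by (intro Max.boundedI) auto
  then show ?thesis unfolding nablaQ_def d_def .
qed



context
  fixes n N q :: nat and x :: "nat \<Rightarrow> nat \<Rightarrow> real" and alpha :: "nat \<Rightarrow> real"
  assumes N: "1 \<le> N"
    and hx: "\<And>k i. k \<in> {1..N} \<Longrightarrow> i \<in> crit n \<Longrightarrow> 0 \<le> x k i \<and> x k i \<le> 1"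
    and ha: "\<And>k. k \<in> {1..N} \<Longrightarrow> 0 \<le> alpha k \<and> alpha k \<le> 1"
    and q: "q \<in> {1..n}"
begin

lemma nabla0: "0 \<le> nablaQ n N x alpha q" using nablaQ_nonneg[OF N q] .

lemma nuQ_ge: assumes "k \<in> {1..N}"
  shows "eps (gam n x k A) (max (alpha k - nablaQ n N x alpha q) 0) \<le> nuQ n N x alpha q A"
  unfolding nuQ_def by (rule Max_ge[OF finite_imageI[OF finite_atLeastAtMost] imageI[OF assms]])

lemma nuQ_le: assumes "\<And>k. k \<in> {1..N} \<Longrightarrow> eps (gam n x k A) (max (alpha k - nablaQ n N x alpha q) 0) \<le> u"
  shows "nuQ n N x alpha q A \<le> u"
  unfolding nuQ_def using N assms by (intro Max.boundedI) auto

lemma nuQ_nonneg: "0 \<le> nuQ n N x alpha q A"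
proof -
  have "1 \<in> {1..N}" using N by simp
  from nuQ_ge[OF this, of A] show ?thesis unfolding eps_def by (auto split: if_splits)
qed

lemma nuQ_le1: "nuQ n N x alpha q A \<le> 1"
proof (rule nuQ_le)
  fix k assume k: "k \<in> {1..N}"
  then show "eps (gam n x k A) (max (alpha k - nablaQ n N x alpha q) 0) \<le> 1"
    using ha[OF k] nabla0 unfolding eps_def by auto
qed

lemma nuQ_mono: assumes "A \<subseteq> B" "crit n - B \<noteq> {}"
  shows "nuQ n N x alpha q A \<le> nuQ n N x alpha q B"
proof (rule nuQ_le)
  fix k assume k: "k \<in> {1..N}"
  have g: "gam n x k B \<le> gam n x k A" using assms by (rule gam_mono)
  have "eps (gam n x k A) (max (alpha k - nablaQ n N x alpha q) 0)
      \<le> eps (gam n x k B) (max (alpha k - nablaQ n N x alpha q) 0)"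
    using g unfolding eps_def by auto
  also have "\<dots> \<le> nuQ n N x alpha q B" using k by (rule nuQ_ge)
  finally show "eps (gam n x k A) (max (alpha k - nablaQ n N x alpha q) 0) \<le> nuQ n N x alpha q B" .
qed

definition Ysp :: "nat set \<Rightarrow> nat set set" where
  "Ysp X = {Y. X \<subset> Y \<and> Y \<subset> crit n \<and> n - q \<le> card Y}"

lemma Ysp_fin: "finite (Ysp X)"
  unfolding Ysp_def by (rule finite_subset[of _ "Pow (crit n)"]) auto

lemma Ysp_ne: assumes "X \<subseteq> crit n" "card X < n - q" shows "Ysp X \<noteq> {}"
proof -
  have "card X \<le> n - q" "n - q \<le> card (crit n)" using assms by auto
  then obtain Y where Y: "X \<subseteq> Y" "Y \<subseteq> crit n" "card Y = n - q"
    using exists_card_between[OF fin_crit assms(1)] by blast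
  have "X \<noteq> Y" using Y assms by auto
  moreover have "Y \<noteq> crit n"
  proof
    assume "Y = crit n"
    then have "card Y = n" by simp
    moreover have "n - q < n" using q by auto
    ultimately show False using Y by simp
  qed
  ultimately have "Y \<in> Ysp X" using Y unfolding Ysp_def by auto
  then show ?thesis by blast
qed

lemma ms_C: "mu_star n N x alpha q (crit n) = 1" unfolding mu_star_def by simp

lemma ms_big: assumes "Y \<subset> crit n" "n - q \<le> card Y"
  shows "mu_star n N x alpha q Y = nuQ n N x alpha q Y"
  unfolding mu_star_def using assms by auto

lemma ms_small: assumes "X \<subseteq> crit n" "card X < n - q"
  shows "mu_star n N x alpha q X = Min (nuQ n N x alpha q ` Ysp X)"
proof -
  have "X \<noteq> crit n" using assms by auto
  then show ?thesis unfolding mu_star_def Ysp_def using assms by auto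
qed

lemma ms_small_le: assumes "X \<subseteq> crit n" "card X < n - q" "Y \<in> Ysp X"
  shows "mu_star n N x alpha q X \<le> nuQ n N x alpha q Y"
  unfolding ms_small[OF assms(1,2)]
  by (rule Min_le[OF finite_imageI[OF Ysp_fin] imageI[OF assms(3)]])

lemma ms_small_ge: assumes "X \<subseteq> crit n" "card X < n - q" "\<And>Y. Y \<in> Ysp X \<Longrightarrow> v \<le> nuQ n N x alpha q Y"
  shows "v \<le> mu_star n N x alpha q X"
  unfolding ms_small[OF assms(1,2)] using Ysp_ne[OF assms(1,2)] Ysp_fin assms(3)
  by (intro Min.boundedI) auto

lemma ms_small_le1: assumes "X \<subseteq> crit n" "card X < n - q"
  shows "mu_star n N x alpha q X \<le> 1"
proof -
  obtain Y where "Y \<in> Ysp X" using Ysp_ne[OF assms] by blast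
  then show ?thesis using ms_small_le[OF assms] nuQ_le1[of Y] by force
qed

lemma ms_bounds: assumes "X \<subseteq> crit n"
  shows "0 \<le> mu_star n N x alpha q X \<and> mu_star n N x alpha q X \<le> 1"
proof (cases "X = crit n")
  case True then show ?thesis by (simp add: ms_C)
next
  case False
  then have XC: "X \<subset> crit n" using assms by auto
  show ?thesis
  proof (cases "n - q \<le> card X")
    case True then show ?thesis using ms_big[OF XC True] nuQ_nonneg nuQ_le1 by simp
  next
    case False
    then have c: "card X < n - q" by simp
    have "0 \<le> mu_star n N x alpha q X" by (rule ms_small_ge[OF assms c nuQ_nonneg])
    then show ?thesis using ms_small_le1[OF assms c] by simp
  qed
qed

lemma ms_mono: assumes XY: "X \<subseteq> Y" "Y \<subseteq> crit n"
  shows "mu_star n N x alpha q X \<le> mu_star n N x alpha q Y"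
proof (cases "Y = crit n")
  case True
  then show ?thesis using ms_bounds[of X] XY ms_C by simp
next
  case False
  then have YC: "Y \<subset> crit n" using XY by auto
  have XC: "X \<subseteq> crit n" using XY by auto
  show ?thesis
  proof (cases "n - q \<le> card Y")
    case True
    show ?thesis
    proof (cases "n - q \<le> card X")
      case True
      have "X \<subset> crit n" using XY YC by auto
      then show ?thesis unfolding ms_big[OF \<open>X \<subset> crit n\<close> True] ms_big[OF YC \<open>n - q \<le> card Y\<close>]
        using YC XY by (intro nuQ_mono) auto
    next
      case False
      then have c: "card X < n - q" by simp
      have "X \<noteq> Y" using False True by auto
      then have "Y \<in> Ysp X" unfolding Ysp_def using XY YC True by auto
      then show ?thesis using ms_small_le[OF XC c] ms_big[OF YC True] by simp
    qed
  next
    case False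
    then have cY: "card Y < n - q" by simp
    have "card X \<le> card Y" using XY by (intro card_mono) (auto intro: finite_subset)
    then have cX: "card X < n - q" using cY by simp
    show ?thesis
    proof (rule ms_small_ge[OF _ cY])
      show "Y \<subseteq> crit n" using XY by simp
      fix Z assume "Z \<in> Ysp Y"
      then have "Z \<in> Ysp X" unfolding Ysp_def using XY by auto
      then show "mu_star n N x alpha q X \<le> nuQ n N x alpha q Z" by (rule ms_small_le[OF XC cX])
    qed
  qed
qed

lemma ms_empty: assumes hA: "\<exists>A. A \<subseteq> crit n \<and> card A = n - q \<and> nuQ n N x alpha q A = 0"
  shows "mu_star n N x alpha q {} = 0"
proof -
  obtain A where A: "A \<subseteq> crit n" "card A = n - q" "nuQ n N x alpha q A = 0" using hA by blast
  have nq: "n - q < n" using q by auto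
  have AC: "A \<subset> crit n" using A nq by auto
  show ?thesis
  proof (cases "n - q = 0")
    case True
    then have "A = {}" using A finite_subset[OF A(1) fin_crit] by simp
    moreover have "{} \<subset> crit n" using AC \<open>A = {}\<close> by simp
    ultimately show ?thesis using ms_big[of "{}"] A True by simp
  next
    case False
    then have c: "card {} < n - q" by simp
    have "A \<noteq> {}" using A False by auto
    then have "A \<in> Ysp {}" unfolding Ysp_def using AC A by auto
    then have "mu_star n N x alpha q {} \<le> 0" using ms_small_le[OF _ c] A by force
    moreover have "0 \<le> mu_star n N x alpha q {}" using ms_bounds[of "{}"] by simp
    ultimately show ?thesis by simp
  qed
qed

lemma ms_cap: assumes hA: "\<exists>A. A \<subseteq> crit n \<and> card A = n - q \<and> nuQ n N x alpha q A = 0"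
  shows "is_capacity n (mu_star n N x alpha q)"
  unfolding is_capacity_def using ms_bounds ms_empty[OF hA] ms_C ms_mono
  by blast

lemma ms_qmin: "q_minitive n q (mu_star n N x alpha q)"
  unfolding q_minitive_def
proof (intro allI impI, elim conjE)
  fix X assume XC: "X \<subseteq> crit n" and c: "card X < n - q"
  define Ys where "Ys = {Y. X \<subset> Y \<and> Y \<subseteq> crit n \<and> n - q \<le> card Y}"
  have "X \<noteq> crit n" using c by auto
  then have "Ys = insert (crit n) (Ysp X)" unfolding Ys_def Ysp_def using XC by auto
  then have "mu_star n N x alpha q ` Ys = insert 1 (mu_star n N x alpha q ` Ysp X)"
    using ms_C by simp
  also have "mu_star n N x alpha q ` Ysp X = nuQ n N x alpha q ` Ysp X"
    by (rule image_cong) (auto simp: Ysp_def intro: ms_big)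
  finally have eq: "mu_star n N x alpha q ` Ys = insert 1 (nuQ n N x alpha q ` Ysp X)" .
  have ne: "nuQ n N x alpha q ` Ysp X \<noteq> {}" using Ysp_ne[OF XC c] by simp
  have fin: "finite (nuQ n N x alpha q ` Ysp X)" using Ysp_fin by simp
  have "Min (insert 1 (nuQ n N x alpha q ` Ysp X)) = min 1 (Min (nuQ n N x alpha q ` Ysp X))"
    by (rule Min_insert[OF fin ne])
  also have "\<dots> = Min (nuQ n N x alpha q ` Ysp X)"
    using ms_small_le1[OF XC c] ms_small[OF XC c] by simp
  also have "\<dots> = mu_star n N x alpha q X" using ms_small[OF XC c] by simp
  finally show "mu_star n N x alpha q X = Min (mu_star n N x alpha q ` Ys)"
    unfolding eq by simp
qed

lemma ms_S_lower: assumes hA: "\<exists>A. A \<subseteq> crit n \<and> card A = n - q \<and> nuQ n N x alpha q A = 0"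
  and k: "k \<in> {1..N}"
  shows "alpha k - nablaQ n N x alpha q \<le> sugeno n (mu_star n N x alpha q) (x k)"
proof (cases "alpha k - nablaQ n N x alpha q \<le> 0")
  case True
  have "0 \<le> sugeno n (mu_star n N x alpha q) (x k)"
    by (rule sugeno_ge[of "{}"]) (auto simp: minOn_def ms_empty[OF hA])
  then show ?thesis using True by linarith
next
  case False
  define b where "b = alpha k - nablaQ n N x alpha q"
  have b0: "0 < b" using False b_def by simp
  have b1: "b \<le> 1" using ha[OF k] nabla0 b_def by simp
  have mb: "max (alpha k - nablaQ n N x alpha q) 0 = b" using b0 b_def by simp
  define B where "B = {j \<in> crit n. b \<le> x k j}"
  have BC: "B \<subseteq> crit n" unfolding B_def by auto
  have fB: "finite B" using finite_subset[OF BC fin_crit] .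
  have mB: "b \<le> minOn (x k) B" using fB b1 by (intro minOn_ge) (auto simp: B_def)
  have msB: "b \<le> mu_star n N x alpha q B"
  proof (cases "B = crit n")
    case True then show ?thesis using ms_C b1 by simp
  next
    case False
    then have nd: "crit n - B \<noteq> {}" using BC by blast
    have gB: "gam n x k B < b" by (rule gam_less[OF nd]) (auto simp: B_def)
    have key: "b \<le> nuQ n N x alpha q Y" if "B \<subseteq> Y" "Y \<subset> crit n" for Y
    proof -
      have "crit n - Y \<noteq> {}" using that by blast
      then have "gam n x k Y \<le> gam n x k B" using that by (intro gam_mono) auto
      then have "eps (gam n x k Y) (max (alpha k - nablaQ n N x alpha q) 0) = b"
        using gB unfolding mb eps_def by simp
      then show ?thesis using nuQ_ge[OF k, of Y] by simp
    qed
    show ?thesis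
    proof (cases "n - q \<le> card B")
      case True
      have "B \<subset> crit n" using False BC by auto
      then show ?thesis using ms_big[OF \<open>B \<subset> crit n\<close> True] key[of B] by simp
    next
      case False
      then have c: "card B < n - q" by simp
      show ?thesis
        by (rule ms_small_ge[OF BC c]) (auto simp: Ysp_def intro: key)
    qed
  qed
  have "b \<le> sugeno n (mu_star n N x alpha q) (x k)" by (rule sugeno_ge[of B n b "x k" "mu_star n N x alpha q", OF BC mB msB])
  then show ?thesis using b_def by simp
qed

lemma ms_S_upper: assumes hA: "\<exists>A. A \<subseteq> crit n \<and> card A = n - q \<and> nuQ n N x alpha q A = 0"
  and k: "k \<in> {1..N}"
  shows "sugeno n (mu_star n N x alpha q) (x k) \<le> alpha k + nablaQ n N x alpha q"
proof -
  define D where "D = nablaQ n N x alpha q"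
  obtain A where A: "A \<subset> crit n" "n - q \<le> card A" "nablaIA n N x alpha k A = nablaI n N x alpha q k"
    using nablaI_att[OF q, of N x alpha k] by blast
  have AD: "nablaIA n N x alpha k A \<le> D" using A(3) nablaI_le_Q[OF k] D_def by simp
  have gA: "gam n x k A \<le> alpha k + D" using pos_le_nablaIA[of n x k A alpha N] AD unfolding pos_def by simp
  have D0: "0 \<le> D" using nabla0 D_def by simp
  have nA: "nuQ n N x alpha q A \<le> alpha k + D"
  proof (rule nuQ_le)
    fix l assume l: "l \<in> {1..N}"
    have sg: "sig (alpha k) (gam n x l A) (alpha l) \<le> D" using sig_le_nablaIA[where i=k and A=A and n=n and x=x and alpha=alpha, OF l] AD by simp
    show "eps (gam n x l A) (max (alpha l - nablaQ n N x alpha q) 0) \<le> alpha k + D"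
    proof (cases "gam n x l A < max (alpha l - D) 0")
      case True
      show ?thesis
      proof (cases "alpha l - D \<le> 0")
        case True then show ?thesis using ha[OF k] D0 unfolding eps_def D_def[symmetric] by auto
      next
        case False
        then have "D < pos (alpha l - gam n x l A)" using \<open>gam n x l A < max (alpha l - D) 0\<close>
          unfolding pos_def by simp
        then have "pos (alpha l - alpha k) / 2 \<le> D" using sg unfolding sig_def by linarith
        then have "alpha l - D \<le> alpha k + D" unfolding pos_def by simp
        then show ?thesis using False unfolding eps_def D_def[symmetric] by auto
      qed
    next
      case False
      then show ?thesis using ha[OF k] D0 unfolding eps_def D_def[symmetric] by auto
    qed
  qed
  have "sugeno n (mu_star n N x alpha q) (x k) \<le> alpha k + D"
  proof (rule L1[OF ms_cap[OF hA]])
    show "A \<subseteq> crit n" "crit n - A \<noteq> {}" using A by auto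
    show "mu_star n N x alpha q A \<le> alpha k + D" using ms_big[OF A(1,2)] nA by simp
    show "gam n x k A \<le> alpha k + D" by (rule gA)
  qed
  then show ?thesis using D_def by simp
qed

lemma ms_err: assumes hA: "\<exists>A. A \<subseteq> crit n \<and> card A = n - q \<and> nuQ n N x alpha q A = 0"
  shows "err n N x alpha (mu_star n N x alpha q) = nablaQ n N x alpha q"
proof (rule antisym)
  show "err n N x alpha (mu_star n N x alpha q) \<le> nablaQ n N x alpha q"
    unfolding err_def
  proof (rule Max.boundedI)
    show "finite ((\<lambda>k. \<bar>sugeno n (mu_star n N x alpha q) (x k) - alpha k\<bar>) ` {1..N})" by simp
    show "(\<lambda>k. \<bar>sugeno n (mu_star n N x alpha q) (x k) - alpha k\<bar>) ` {1..N} \<noteq> {}" using N by simp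
    fix a assume "a \<in> (\<lambda>k. \<bar>sugeno n (mu_star n N x alpha q) (x k) - alpha k\<bar>) ` {1..N}"
    then obtain k where k: "k \<in> {1..N}" "a = \<bar>sugeno n (mu_star n N x alpha q) (x k) - alpha k\<bar>" by blast
    show "a \<le> nablaQ n N x alpha q" using ms_S_lower[OF hA k(1)] ms_S_upper[OF hA k(1)] k(2) by simp
  qed
  show "nablaQ n N x alpha q \<le> err n N x alpha (mu_star n N x alpha q)"
    by (rule LB[OF N hx ha q ms_cap[OF hA] ms_qmin])
qed

lemma ms_minimal: assumes cap: "is_capacity n mu" and qm: "q_minitive n q mu"
  and e: "err n N x alpha mu = nablaQ n N x alpha q" and XC: "X \<subseteq> crit n"
  shows "mu_star n N x alpha q X \<le> mu X"
proof -
  have key: "nuQ n N x alpha q Y \<le> mu Y" if Y: "Y \<subset> crit n" for Y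
  proof (rule nuQ_le)
    fix k assume k: "k \<in> {1..N}"
    have YC: "Y \<subseteq> crit n" "crit n - Y \<noteq> {}" using Y by auto
    have m0: "0 \<le> mu Y" using cap YC unfolding is_capacity_def by blast
    show "eps (gam n x k Y) (max (alpha k - nablaQ n N x alpha q) 0) \<le> mu Y"
    proof (cases "gam n x k Y < alpha k - nablaQ n N x alpha q")
      case True
      have "alpha k - nablaQ n N x alpha q \<le> sugeno n mu (x k)"
        using err_ge[OF k, of n mu x alpha] e by linarith
      then have "alpha k - nablaQ n N x alpha q \<le> mu Y" using L2[OF cap _ YC True] by simp
      then show ?thesis using m0 unfolding eps_def by auto
    next
      case False
      then show ?thesis using m0 unfolding eps_def by auto
    qed
  qed
  show ?thesis
  proof (cases "X = crit n")
    case True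
    then show ?thesis using cap ms_C unfolding is_capacity_def by simp
  next
    case False
    then have XC': "X \<subset> crit n" using XC by auto
    show ?thesis
    proof (cases "n - q \<le> card X")
      case True
      then show ?thesis using ms_big[OF XC' True] key[OF XC'] by simp
    next
      case False
      then have c: "card X < n - q" by simp
      define Ys where "Ys = {Y. X \<subset> Y \<and> Y \<subseteq> crit n \<and> n - q \<le> card Y}"
      have eq: "mu X = Min (mu ` Ys)" using qm XC c unfolding q_minitive_def Ys_def by blast
      have fY: "finite Ys" unfolding Ys_def by (rule finite_subset[of _ "Pow (crit n)"]) auto
      have "crit n \<in> Ys" using XC' unfolding Ys_def by auto
      then have "Min (mu ` Ys) \<in> mu ` Ys" using fY by (intro Min_in) auto
      then obtain Y where Y: "Y \<in> Ys" "mu Y = mu X" using eq by auto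
      show ?thesis
      proof (cases "Y = crit n")
        case True
        then have "mu X = 1" using Y cap unfolding is_capacity_def by simp
        then show ?thesis using ms_bounds[OF XC] by simp
      next
        case False
        then have "Y \<in> Ysp X" using Y unfolding Ys_def Ysp_def by auto
        then have "mu_star n N x alpha q X \<le> nuQ n N x alpha q Y" by (rule ms_small_le[OF XC c])
        moreover have "nuQ n N x alpha q Y \<le> mu Y" using False Y unfolding Ys_def by (intro key) auto
        ultimately show ?thesis using Y by simp
      qed
    qed
  qed
qed

end


theorem corollary3:
  fixes n N q :: nat and x :: "nat \<Rightarrow> nat \<Rightarrow> real" and alpha :: "nat \<Rightarrow> real"
  assumes "1 \<le> N"
    and "\<And>k i. k \<in> {1..N} \<Longrightarrow> i \<in> crit n \<Longrightarrow> 0 \<le> x k i \<and> x k i \<le> 1"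
    and "\<And>k. k \<in> {1..N} \<Longrightarrow> 0 \<le> alpha k \<and> alpha k \<le> 1"
    and "q \<in> {1..n}"
    and "\<exists>A. A \<subseteq> crit n \<and> card A = n - q \<and> nuQ n N x alpha q A = 0"
  shows "is_capacity n (mu_star n N x alpha q)
       \<and> q_minitive n q (mu_star n N x alpha q)
       \<and> err n N x alpha (mu_star n N x alpha q) = nablaQ n N x alpha q
       \<and> (\<forall>mu. is_capacity n mu \<and> q_minitive n q mu
              \<and> err n N x alpha mu = nablaQ n N x alpha q
              \<longrightarrow> (\<forall>X. X \<subseteq> crit n \<longrightarrow> mu_star n N x alpha q X \<le> mu X))"
proof (intro conjI allI impI)
  show "is_capacity n (mu_star n N x alpha q)" by (rule ms_cap) (fact assms)+
  show "q_minitive n q (mu_star n N x alpha q)" by (rule ms_qmin) (fact assms)+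
  show "err n N x alpha (mu_star n N x alpha q) = nablaQ n N x alpha q" by (rule ms_err) (fact assms)+
  fix mu X
  assume h: "is_capacity n mu \<and> q_minitive n q mu \<and> err n N x alpha mu = nablaQ n N x alpha q"
    and X: "X \<subseteq> crit n"
  from h have h1: "is_capacity n mu" and h2: "q_minitive n q mu"
    and h3: "err n N x alpha mu = nablaQ n N x alpha q" by auto
  show "mu_star n N x alpha q X \<le> mu X"
    by (rule ms_minimal[of N n x alpha q mu X]) (fact assms h1 h2 h3 X)+
qed

end
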